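(* Let $p$ be a prime, $V_1=\mathbb{F}_p^k$, $n$ a positive integer, and $V=V_1^n$. Let $G_1\le GL(V_1)$ and $H\le S_n$, and suppose either (i) $G_1$ is transitive on $V_1\setminus\{0\}$ and $H$ is $p$-concealed, or (ii) $G_1$ is $p$-exceptional and $H$ has order coprime to $p$. Then the wreath product $G_1\wr H$, acting naturally on $V=V_1^n$, is $p$-exceptional.
   Context: $G\le GL(V)$ is $p$-exceptional if $p$ divides $|G|$ and every orbit of $G$ on $V$ has size coprime to $p$. $H\le S_n$ is $p$-concealed if $p$ divides $|H|$ and every orbit of $H$ on the power set of $\{1,\dots,n\}$ has size coprime to $p$. *)

theory Defs
  imports "HOL-Analysis.Analysis"
begin

text \<open>A group of permutations of a (finite) type, given as a set of maps closed
  under composition and inversion (a subgroup of Sym(UNIV)).\<close>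
definition perm_group :: "('a \<Rightarrow> 'a) set \<Rightarrow> bool" where
  "perm_group G \<longleftrightarrow> G \<noteq> {} \<and> (\<forall>g\<in>G. bij g) \<and>
     (\<forall>g\<in>G. \<forall>h\<in>G. g \<circ> h \<in> G) \<and> (\<forall>g\<in>G. inv g \<in> G)"

text \<open>GL(V): invertible linear maps of an F-vector space V with scalar
  multiplication smul.\<close>
definition GL :: "('f::field \<Rightarrow> 'v::ab_group_add \<Rightarrow> 'v) \<Rightarrow> ('v \<Rightarrow> 'v) set" where
  "GL smul = {g. Vector_Spaces.linear smul smul g \<and> bij g}"

text \<open>G is a subgroup of GL(V).\<close>
definition linear_group :: "('f::field \<Rightarrow> 'v::ab_group_add \<Rightarrow> 'v) \<Rightarrow> ('v \<Rightarrow> 'v) set \<Rightarrow> bool" where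
  "linear_group smul G \<longleftrightarrow> perm_group G \<and> G \<subseteq> GL smul"

text \<open>Scalar multiplication on V1^n = ('f^'k)^'n (blockwise).\<close>
definition block_scale :: "'f::field \<Rightarrow> ('f ^ 'k) ^ 'n \<Rightarrow> ('f ^ 'k) ^ 'n" where
  "block_scale c v = (\<chi> j. c *s (v $ j))"

definition orbit :: "('a \<Rightarrow> 'a) set \<Rightarrow> 'a \<Rightarrow> 'a set" where
  "orbit G x = (\<lambda>g. g x) ` G"

text \<open>p-exceptional linear groups.\<close>
definition p_exceptional :: "('f::field \<Rightarrow> 'v::ab_group_add \<Rightarrow> 'v) \<Rightarrow> nat \<Rightarrow> ('v \<Rightarrow> 'v) set \<Rightarrow> bool" where
  "p_exceptional smul p G \<longleftrightarrow> linear_group smul G \<and> p dvd card G \<and>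
     (\<forall>v. coprime (card (orbit G v)) p)"

text \<open>p-concealed permutation groups: orbits on the power set of the point set.\<close>
definition p_concealed :: "nat \<Rightarrow> ('n \<Rightarrow> 'n) set \<Rightarrow> bool" where
  "p_concealed p H \<longleftrightarrow> perm_group H \<and> p dvd card H \<and>
     (\<forall>A :: 'n set. coprime (card ((\<lambda>h. h ` A) ` H)) p)"

text \<open>Transitivity on the nonzero vectors.\<close>
definition transitive_nonzero :: "('f::field ^ 'm \<Rightarrow> 'f ^ 'm) set \<Rightarrow> bool" where
  "transitive_nonzero G \<longleftrightarrow> (\<forall>v w. v \<noteq> 0 \<longrightarrow> w \<noteq> 0 \<longrightarrow> (\<exists>g\<in>G. g v = w))"

text \<open>The wreath product G1 wr H acting naturally on V1^n: the element
  (g_1,...,g_n; h) sends (v_i)_i to w with w_{h(i)} = g_i(v_i).\<close>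
definition wreath :: "('v \<Rightarrow> 'v) set \<Rightarrow> ('n::finite \<Rightarrow> 'n) set \<Rightarrow> ('v ^ 'n \<Rightarrow> 'v ^ 'n) set" where
  "wreath G1 H = {(\<lambda>v. \<chi> j. g (inv h j) (v $ (inv h j))) | g h. (\<forall>i. g i \<in> G1) \<and> h \<in> H}"

end

theory Submission
  imports Defs
begin


lemma card_fibers:
  assumes "finite X" "\<And>y. y \<in> f ` X \<Longrightarrow> card {x\<in>X. f x = y} = c"
  shows "card X = card (f ` X) * c"
proof -
  have X: "X = (\<Union>y\<in>f ` X. {x\<in>X. f x = y})" by auto
  have "card X = (\<Sum>y\<in>f ` X. card {x\<in>X. f x = y})"
    by (subst X, rule card_UN_disjoint) (use assms in auto)
  also have "\<dots> = (\<Sum>y\<in>f ` X. c)" using assms(2) by simp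
  finally show ?thesis by simp
qed

lemma perm_group_id: "perm_group G \<Longrightarrow> id \<in> G"
  unfolding perm_group_def by (metis all_not_in_conv bij_is_inj inv_o_cancel)

lemma orbit_card_dvd:
  fixes G :: "('a\<Rightarrow>'a) set" and act :: "('a\<Rightarrow>'a) \<Rightarrow> 'b \<Rightarrow> 'b"
  assumes pg: "perm_group G" and fin: "finite G"
    and comp: "\<And>g h y. g \<in> G \<Longrightarrow> h \<in> G \<Longrightarrow> act (g \<circ> h) y = act g (act h y)"
    and aid: "\<And>y. act id y = y"
  shows "card ((\<lambda>g. act g x) ` G) dvd card G"
proof -
  let ?S = "{g\<in>G. act g x = x}"
  have "card G = card ((\<lambda>g. act g x) ` G) * card ?S"
  proof (rule card_fibers[OF fin])
    fix y assume "y \<in> (\<lambda>g. act g x) ` G"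
    then obtain g0 where g0: "g0 \<in> G" "y = act g0 x" by auto
    have bg: "bij g0" "inv g0 \<in> G" using pg g0 unfolding perm_group_def by auto
    have "bij_betw (\<lambda>s. g0 \<circ> s) ?S {g\<in>G. act g x = y}"
    proof (rule bij_betwI[where g="\<lambda>k. inv g0 \<circ> k"])
      show "(\<circ>) g0 \<in> ?S \<rightarrow> {g \<in> G. act g x = y}"
        using pg g0 comp unfolding perm_group_def by auto
      show "(\<circ>) (inv g0) \<in> {g \<in> G. act g x = y} \<rightarrow> ?S"
      proof
        fix k assume k: "k \<in> {g \<in> G. act g x = y}"
        have "act (inv g0 \<circ> k) x = act (inv g0) (act g0 x)" using k g0 bg comp by auto
        also have "\<dots> = act (inv g0 \<circ> g0) x" using g0 bg comp by simp
        also have "\<dots> = x" using bg by (simp add: bij_is_inj aid)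
        finally show "inv g0 \<circ> k \<in> ?S" using k bg pg unfolding perm_group_def by auto
      qed
      show "inv g0 \<circ> (g0 \<circ> s) = s" for s
        using bg by (metis bij_is_inj inv_o_cancel comp_assoc id_comp)
      show "g0 \<circ> (inv g0 \<circ> s) = s" for s
        using bg by (metis bij_def surj_iff comp_assoc id_comp)
    qed
    then show "card {g\<in>G. act g x = y} = card ?S" by (simp add: bij_betw_same_card)
  qed
  then show ?thesis by simp
qed


definition wr :: "('n::finite \<Rightarrow> ('v\<Rightarrow>'v)) \<Rightarrow> ('n\<Rightarrow>'n) \<Rightarrow> ('v^'n \<Rightarrow> 'v^'n)" where
  "wr g h = (\<lambda>v. \<chi> j. g (inv h j) (v $ inv h j))"

lemma wreath_wr: "wreath G1 H = {wr g h | g h. (\<forall>i. g i \<in> G1) \<and> h \<in> H}"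
  unfolding wreath_def wr_def by simp

lemma wr_nth: "wr g h v $ j = g (inv h j) (v $ inv h j)"
  unfolding wr_def by simp

lemma wr_apply_h: "bij h \<Longrightarrow> wr g h v $ (h i) = g i (v $ i)"
  unfolding wr_def by (simp add: bij_is_inj)

lemma bij_surj_ex: "bij h \<Longrightarrow> \<exists>i. j = h i"
  by (metis bij_pointE)

lemma wr_comp: assumes "bij h1" "bij h2"
  shows "wr g2 h2 \<circ> wr g1 h1 = wr (\<lambda>i. g2 (h1 i) \<circ> g1 i) (h2 \<circ> h1)"
proof (rule ext, subst vec_eq_iff, rule allI)
  fix v j
  have b: "bij (h2 \<circ> h1)" using assms by (simp add: bij_comp)
  obtain i where "j = (h2 \<circ> h1) i" using bij_surj_ex[OF b] by blast
  moreover have "wr (\<lambda>i. g2 (h1 i) \<circ> g1 i) (h2 \<circ> h1) v $ ((h2 \<circ> h1) i) = (g2 (h1 i) \<circ> g1 i) (v $ i)"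
    by (rule wr_apply_h[OF b])
  moreover have "(wr g2 h2 \<circ> wr g1 h1) v $ ((h2 \<circ> h1) i) = (g2 (h1 i) \<circ> g1 i) (v $ i)"
    using assms by (simp only: o_apply wr_apply_h)
  ultimately show "(wr g2 h2 \<circ> wr g1 h1) v $ j = wr (\<lambda>i. g2 (h1 i) \<circ> g1 i) (h2 \<circ> h1) v $ j"
    by simp
qed

lemma wr_id: "wr (\<lambda>_. id) id = id"
  unfolding wr_def by (simp add: inv_id fun_eq_iff)

lemma wr_inv_comp: assumes "bij h" "\<And>i. bij (g i)"
  shows "wr (\<lambda>m. inv (g (inv h m))) (inv h) \<circ> wr g h = id"
        "wr g h \<circ> wr (\<lambda>m. inv (g (inv h m))) (inv h) = id"
proof -
  have bi: "bij (inv h)" using assms by (simp add: bij_imp_bij_inv)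
  have e1: "(\<lambda>i. inv (g (inv h (h i))) \<circ> g i) = (\<lambda>_. id)"
  proof
    fix i
    have "inv h (h i) = i" using assms(1) bij_is_inj inv_f_f by metis
    then show "inv (g (inv h (h i))) \<circ> g i = id" using assms(2)[of i] bij_is_inj inv_o_cancel by metis
  qed
  have e2: "inv h \<circ> h = id" using assms(1) bij_is_inj inv_o_cancel by metis
  have "wr (\<lambda>m. inv (g (inv h m))) (inv h) \<circ> wr g h = wr (\<lambda>i. inv (g (inv h (h i))) \<circ> g i) (inv h \<circ> h)"
    using wr_comp assms bi by blast
  also have "\<dots> = id" unfolding e1 e2 wr_id ..
  finally show "wr (\<lambda>m. inv (g (inv h m))) (inv h) \<circ> wr g h = id" .
  have e3: "(\<lambda>i. g (inv h i) \<circ> inv (g (inv h i))) = (\<lambda>_. id)"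
  proof
    fix i show "g (inv h i) \<circ> inv (g (inv h i)) = id" using assms(2) bij_is_surj surj_iff by metis
  qed
  have e4: "h \<circ> inv h = id" using assms(1) bij_is_surj surj_iff by metis
  have "wr g h \<circ> wr (\<lambda>m. inv (g (inv h m))) (inv h) = wr (\<lambda>i. g (inv h i) \<circ> inv (g (inv h i))) (h \<circ> inv h)"
    using wr_comp assms bi by blast
  also have "\<dots> = id" unfolding e3 e4 wr_id ..
  finally show "wr g h \<circ> wr (\<lambda>m. inv (g (inv h m))) (inv h) = id" .
qed

lemma vs_block: "vector_space (block_scale :: 'f::field \<Rightarrow> ('f ^ 'k) ^ 'n \<Rightarrow> _)"
  unfolding vector_space_def block_scale_def
  by (simp add: vec_eq_iff vector_add_ldistrib vector_sadd_rdistrib vector_smult_assoc)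

lemma wr_linear:
  assumes "\<And>i. Vector_Spaces.linear (*s) (*s) (g i :: 'f::field^'k \<Rightarrow> _)"
  shows "Vector_Spaces.linear block_scale block_scale (wr g h :: ('f^'k)^'n::finite \<Rightarrow> _)"
proof -
  have a: "g i (x + y) = g i x + g i y" "g i (c *s x) = c *s g i x" for i x y c
    using assms[of i, unfolded Vector_Spaces.linear_iff] by auto
  show ?thesis unfolding Vector_Spaces.linear_iff
  proof (intro conjI allI)
    show "vector_space (block_scale :: 'f \<Rightarrow> ('f ^ 'k) ^ 'n \<Rightarrow> _)" by (rule vs_block)
    then show "vector_space (block_scale :: 'f \<Rightarrow> ('f ^ 'k) ^ 'n \<Rightarrow> _)" .
    show "wr g h (x + y) = wr g h x + wr g h y" for x y
      unfolding vec_eq_iff by (simp add: wr_nth a)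
    show "wr g h (block_scale c x) = block_scale c (wr g h x)" for c x
      unfolding vec_eq_iff by (simp add: wr_nth a block_scale_def)
  qed
qed


lemma pg_bij: "perm_group G \<Longrightarrow> g \<in> G \<Longrightarrow> bij g"
  unfolding perm_group_def by auto
lemma pg_comp: "perm_group G \<Longrightarrow> g \<in> G \<Longrightarrow> h \<in> G \<Longrightarrow> g \<circ> h \<in> G"
  unfolding perm_group_def by auto
lemma pg_inv: "perm_group G \<Longrightarrow> g \<in> G \<Longrightarrow> inv g \<in> G"
  unfolding perm_group_def by auto

lemma lg_lin: "linear_group s G \<Longrightarrow> g \<in> G \<Longrightarrow> Vector_Spaces.linear s s g"
  unfolding linear_group_def GL_def by auto

lemma lin_zero:
  assumes "Vector_Spaces.linear (*s) (*s) (g :: 'f::field^'k \<Rightarrow> 'f^'k)"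
  shows "g 0 = 0"
proof -
  have "g (0 *s 0) = 0 *s g 0" using assms[unfolded Vector_Spaces.linear_iff] by blast
  then show ?thesis by simp
qed

lemma lg_zero_iff:
  assumes "linear_group (*s) G" "g \<in> G"
  shows "(g (x :: 'f::field^'k) = 0) \<longleftrightarrow> x = 0"
proof -
  have "g 0 = 0" using lin_zero lg_lin assms by blast
  moreover have "inj g" using assms pg_bij bij_is_inj unfolding linear_group_def by blast
  ultimately show ?thesis by (metis injD)
qed

lemma wr_mem: "(\<forall>i. g i \<in> G1) \<Longrightarrow> h \<in> H \<Longrightarrow> wr g h \<in> wreath G1 H"
  unfolding wreath_wr by blast

lemma linear_group_W:
  fixes G1 :: "('f::field ^ 'k \<Rightarrow> 'f ^ 'k) set" and H :: "('n::finite \<Rightarrow> 'n) set"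
  assumes G: "linear_group (*s) G1" and H: "perm_group H"
  shows "linear_group (block_scale :: 'f \<Rightarrow> _) (wreath G1 H)"
proof -
  have pG: "perm_group G1" using G unfolding linear_group_def by simp
  have idG: "id \<in> G1" "id \<in> H" using pG H perm_group_id by auto
  have inv_ok: "wr (\<lambda>m. inv (g (inv h m))) (inv h) \<circ> wr g h = id \<and> wr g h \<circ> wr (\<lambda>m. inv (g (inv h m))) (inv h) = id"
    if "\<forall>i. g i \<in> G1" "h \<in> H" for g h
    proof -
    have "bij h" using pg_bij[OF H that(2)] .
    moreover have "\<And>i. bij (g i)" using pg_bij[OF pG] that(1) by blast
    ultimately show ?thesis using wr_inv_comp[of h g] by simp
  qed
  have "perm_group (wreath G1 H)"
    unfolding perm_group_def
  proof (intro conjI ballI)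
    show "wreath G1 H \<noteq> {}" using wr_mem[of "\<lambda>_. id" G1 id H] idG by auto
  next
    fix f assume "f \<in> wreath G1 H"
    then obtain g h where f: "f = wr g h" "\<forall>i. g i \<in> G1" "h \<in> H" unfolding wreath_wr by blast
    show "bij f" using inv_ok[OF f(2,3)] unfolding f(1) by (intro o_bij) auto
    have "inv f = wr (\<lambda>m. inv (g (inv h m))) (inv h)"
      using inv_ok[OF f(2,3)] unfolding f(1) by (intro inv_unique_comp) auto
    moreover have "wr (\<lambda>m. inv (g (inv h m))) (inv h) \<in> wreath G1 H"
      using f pg_inv[OF pG] pg_inv[OF H] by (intro wr_mem) auto
    ultimately show "inv f \<in> wreath G1 H" by simp
  next
    fix f1 f2 assume "f1 \<in> wreath G1 H" "f2 \<in> wreath G1 H"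
    then obtain g1 h1 g2 h2 where f: "f1 = wr g1 h1" "\<forall>i. g1 i \<in> G1" "h1 \<in> H"
      "f2 = wr g2 h2" "\<forall>i. g2 i \<in> G1" "h2 \<in> H" unfolding wreath_wr by blast
    have "f1 \<circ> f2 = wr (\<lambda>i. g1 (h2 i) \<circ> g2 i) (h1 \<circ> h2)"
      using wr_comp[of h2 h1 g1 g2] pg_bij[OF H f(3)] pg_bij[OF H f(6)] f(1,4) by simp
    moreover have "\<dots> \<in> wreath G1 H" using f pg_comp[OF pG] pg_comp[OF H] by (intro wr_mem) auto
    ultimately show "f1 \<circ> f2 \<in> wreath G1 H" by simp
  qed
  moreover have "wreath G1 H \<subseteq> GL block_scale"
  proof
    fix f assume "f \<in> wreath G1 H"
    then obtain g h where f: "f = wr g h" "\<forall>i. g i \<in> G1" "h \<in> H" unfolding wreath_wr by blast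
    have "bij f" using inv_ok[OF f(2,3)] unfolding f(1) by (intro o_bij) auto
    moreover have "Vector_Spaces.linear block_scale block_scale f"
      unfolding f(1) by (rule wr_linear) (use f(2) lg_lin G in blast)
    ultimately show "f \<in> GL block_scale" unfolding GL_def by simp
  qed
  ultimately show ?thesis unfolding linear_group_def by simp
qed


lemma wr_inj:
  fixes G1 :: "('f::field ^ 'k \<Rightarrow> 'f ^ 'k) set" and H :: "('n::finite \<Rightarrow> 'n) set"
  assumes G: "linear_group (*s) G1" and H: "perm_group H"
    and g: "\<forall>i. g i \<in> G1" "h \<in> H" "\<forall>i. g' i \<in> G1" "h' \<in> H"
    and eq: "wr g h = wr g' h'"
  shows "g = g' \<and> h = h'"
proof -
  have bh: "bij h" "bij h'" using g pg_bij H by auto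
  have hh: "h = h'"
  proof
    fix i show "h i = h' i"
    proof (rule ccontr)
      assume ne: "h i \<noteq> h' i"
      define e where "e = ((\<chi> _. 1) :: 'f^'k)"
      have e0: "e \<noteq> 0" unfolding e_def by (simp add: vec_eq_iff)
      define v where "v = ((\<chi> m. if m = i then e else 0) :: ('f^'k)^'n)"
      have "wr g h v $ (h i) = g i e" unfolding wr_apply_h[OF bh(1)] v_def by simp
      moreover have "g i e \<noteq> 0" using lg_zero_iff[OF G] g e0 by blast
      moreover have "inv h' (h i) \<noteq> i"
      proof
        assume "inv h' (h i) = i"
        then have "h' (inv h' (h i)) = h' i" by simp
        then show False using ne bh(2) by (simp add: bij_is_surj surj_f_inv_f)
      qed
      then have "wr g' h' v $ (h i) = 0" using lg_zero_iff[OF G] g by (simp add: wr_nth v_def)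
      ultimately show False using eq by simp
    qed
  qed
  have "g = g'"
  proof (rule ext, rule ext)
    fix i u
    define v where "v = ((\<chi> _. u) :: ('f^'k)^'n)"
    have "wr g h v $ (h i) = g i u" "wr g' h v $ (h i) = g' i u"
      unfolding wr_apply_h[OF bh(1)] v_def by simp_all
    then show "g i u = g' i u" using eq hh by simp
  qed
  with hh show ?thesis by simp
qed

lemma card_W:
  fixes G1 :: "('f::{field,finite} ^ 'k \<Rightarrow> 'f ^ 'k) set" and H :: "('n::finite \<Rightarrow> 'n) set"
  assumes G: "linear_group (*s) G1" and H: "perm_group H"
  shows "card (wreath G1 H) = card G1 ^ CARD('n) * card H"
proof -
  let ?P = "{g :: 'n \<Rightarrow> _. \<forall>i. g i \<in> G1}"
  have W: "wreath G1 H = (\<lambda>(g,h). wr g h) ` (?P \<times> H)" unfolding wreath_wr by auto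
  have inj: "inj_on (\<lambda>(g,h). wr g h) (?P \<times> H)"
    by (rule inj_onI) (use wr_inj[OF G H] in auto)
  have P: "?P = PiE UNIV (\<lambda>_. G1)" by (auto simp: PiE_UNIV_domain Pi_def)
  have cP: "card ?P = card G1 ^ CARD('n)" unfolding P by (subst card_PiE) auto
  show ?thesis unfolding W card_image[OF inj] card_cartesian_product cP ..
qed


lemma card_vecset:
  fixes S :: "'n::finite \<Rightarrow> 'v set"
  shows "card {w :: 'v^'n. \<forall>j. w $ j \<in> S j} = (\<Prod>j\<in>UNIV. card (S j))"
proof -
  have e: "{w :: 'v^'n. \<forall>j. w $ j \<in> S j} = vec_lambda ` PiE UNIV S"
  proof
    show "{w :: 'v^'n. \<forall>j. w $ j \<in> S j} \<subseteq> vec_lambda ` PiE UNIV S"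
    proof
      fix w :: "'v^'n" assume "w \<in> {w. \<forall>j. w $ j \<in> S j}"
      then have "vec_nth w \<in> PiE UNIV S" by (auto simp: PiE_UNIV_domain)
      moreover have "w = vec_lambda (vec_nth w)" by simp
      ultimately show "w \<in> vec_lambda ` PiE UNIV S" by blast
    qed
    show "vec_lambda ` PiE UNIV S \<subseteq> {w :: 'v^'n. \<forall>j. w $ j \<in> S j}"
      by (auto simp: PiE_UNIV_domain)
  qed
  have inj: "inj_on (vec_lambda :: ('n \<Rightarrow> 'v) \<Rightarrow> 'v^'n) (PiE UNIV S)"
    by (rule inj_onI) (simp add: vec_lambda_inject)
  show ?thesis unfolding e card_image[OF inj] by (subst card_PiE) auto
qed

lemma orbit_self: "perm_group G \<Longrightarrow> x \<in> orbit G x"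
  unfolding orbit_def by (rule image_eqI[where x=id]) (auto simp: perm_group_id)

lemma orbit_eq: assumes G: "perm_group G" and y: "y \<in> orbit G x"
  shows "orbit G y = orbit G x"
proof -
  obtain g where g: "g \<in> G" "y = g x" using y unfolding orbit_def by auto
  have "orbit G y \<subseteq> orbit G x"
  proof
    fix z assume "z \<in> orbit G y"
    then obtain k where "k \<in> G" "z = k y" unfolding orbit_def by auto
    then have "z = (k \<circ> g) x" "k \<circ> g \<in> G" using g pg_comp[OF G] by auto
    then show "z \<in> orbit G x" unfolding orbit_def by blast
  qed
  moreover have "orbit G x \<subseteq> orbit G y"
  proof
    fix z assume "z \<in> orbit G x"
    then obtain k where k: "k \<in> G" "z = k x" unfolding orbit_def by auto
    have "inv g (g x) = x" using pg_bij[OF G g(1)] by (simp add: bij_is_inj)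
    then have "z = (k \<circ> inv g) y" "k \<circ> inv g \<in> G" using g k pg_comp[OF G] pg_inv[OF G] by auto
    then show "z \<in> orbit G y" unfolding orbit_def by blast
  qed
  ultimately show ?thesis by blast
qed

lemma orbit_W_char:
  fixes G1 :: "('f::field ^ 'k \<Rightarrow> 'f ^ 'k) set" and H :: "('n::finite \<Rightarrow> 'n) set"
  assumes G: "perm_group G1" and H: "perm_group H"
  shows "w \<in> orbit (wreath G1 H) v \<longleftrightarrow> (\<exists>h\<in>H. \<forall>i. \<exists>x\<in>G1. x (v$i) = w$(h i))"
proof
  assume "w \<in> orbit (wreath G1 H) v"
  then obtain g h where gh: "\<forall>i. g i \<in> G1" "h \<in> H" "w = wr g h v"
    unfolding orbit_def wreath_wr by blast
  then show "\<exists>h\<in>H. \<forall>i. \<exists>x\<in>G1. x (v$i) = w$(h i)"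
    using wr_apply_h[OF pg_bij[OF H gh(2)]] by metis
next
  assume "\<exists>h\<in>H. \<forall>i. \<exists>x\<in>G1. x (v$i) = w$(h i)"
  then obtain h where h: "h \<in> H" "\<forall>i. \<exists>x\<in>G1. x (v$i) = w$(h i)" by blast
  define g where "g i = (SOME x. x \<in> G1 \<and> x (v$i) = w$(h i))" for i
  have g: "g i \<in> G1 \<and> g i (v$i) = w$(h i)" for i
    unfolding g_def by (rule someI_ex[where P="\<lambda>x. x \<in> G1 \<and> x (v$i) = w$(h i)"]) (use h(2) in blast)
  have bh: "bij h" using pg_bij[OF H h(1)] .
  have "wr g h v = w"
  proof (subst vec_eq_iff, rule allI)
    fix j obtain i where "j = h i" using bij_surj_ex[OF bh] by blast
    then show "wr g h v $ j = w $ j" using wr_apply_h[OF bh, of g v i] g[of i] by simp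
  qed
  moreover have "wr g h \<in> wreath G1 H" using g h(1) by (intro wr_mem) auto
  ultimately show "w \<in> orbit (wreath G1 H) v" unfolding orbit_def by blast
qed


lemma cop1: assumes "prime (p::nat)" "K > 0" shows "coprime (p^K - 1) p"
proof -
  have "p \<noteq> 0" using assms(1) by (metis not_prime_0)
  then have "p^K > 0" by simp
  then have e: "Suc (p^K - 1) = p^K" by simp
  have "coprime (p^K - 1) (Suc (p^K - 1))" by (rule coprime_Suc_right_nat)
  then have "coprime (p^K - 1) (p^K)" unfolding e .
  moreover have "p dvd p^K" using assms(2) by (simp add: dvd_power)
  ultimately show ?thesis using coprime_divisors[of "p^K - 1" "p^K - 1" p "p^K"] by simp
qed

lemma prod_if_card: "(\<Prod>j\<in>(UNIV::'n::finite set). if j \<in> B then (c::nat) else 1) = c ^ card B"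
  by (simp add: prod.If_cases Int_absorb1)

lemma orbit_case1:
  fixes G1 :: "('f::{field,finite} ^ 'k \<Rightarrow> 'f ^ 'k) set" and H :: "('n::finite \<Rightarrow> 'n) set"
  assumes G: "linear_group (*s) G1" and H: "perm_group H" and tr: "transitive_nonzero G1"
    and conc: "\<forall>A :: 'n set. coprime (card ((\<lambda>h. h ` A) ` H)) p"
    and p: "prime p" "CARD('f) = p"
  shows "coprime (card (orbit (wreath G1 H) v)) p"
proof -
  have pG: "perm_group G1" using G unfolding linear_group_def by simp
  define A where "A = {i. v$i \<noteq> 0}"
  define supp where "supp w = {j. w$j \<noteq> (0::'f^'k)}" for w :: "('f^'k)^'n"
  let ?X = "orbit (wreath G1 H) v"
  have claim: "w \<in> ?X \<longleftrightarrow> (\<exists>h\<in>H. supp w = h ` A)" for w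
  proof
    assume "w \<in> ?X"
    then obtain h where h: "h \<in> H" "\<forall>i. \<exists>x\<in>G1. x (v$i) = w$(h i)"
      using orbit_W_char[OF pG H] by blast
    have bh: "bij h" using pg_bij[OF H h(1)] .
    have nz: "w$(h i) \<noteq> 0 \<longleftrightarrow> v$i \<noteq> 0" for i
      using h(2) lg_zero_iff[OF G] by metis
    have "supp w = h ` A"
    proof
      show "supp w \<subseteq> h ` A"
      proof
        fix j assume j: "j \<in> supp w"
        obtain i where i: "j = h i" using bij_surj_ex[OF bh] by blast
        show "j \<in> h ` A" using j nz[of i] unfolding i supp_def A_def by auto
      qed
      show "h ` A \<subseteq> supp w" using nz unfolding supp_def A_def by auto
    qed
    then show "\<exists>h\<in>H. supp w = h ` A" using h(1) by blast
  next
    assume "\<exists>h\<in>H. supp w = h ` A"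
    then obtain h where h: "h \<in> H" "supp w = h ` A" by blast
    have bh: "bij h" using pg_bij[OF H h(1)] .
    have "\<forall>i. \<exists>x\<in>G1. x (v$i) = w$(h i)"
    proof
      fix i
      show "\<exists>x\<in>G1. x (v$i) = w$(h i)"
      proof (cases "v$i = 0")
        case True
        then have "i \<notin> A" unfolding A_def by simp
        then have "h i \<notin> h ` A" using bh by (simp add: bij_is_inj inj_image_mem_iff)
        then have "w$(h i) = 0" using h(2) unfolding supp_def by auto
        then show ?thesis using True perm_group_id[OF pG] by (intro bexI[of _ id]) simp_all
      next
        case False
        then have "h i \<in> h ` A" unfolding A_def by simp
        then have "w$(h i) \<noteq> 0" using h(2) unfolding supp_def by auto
        then show ?thesis using False tr unfolding transitive_nonzero_def by blast
      qed
    qed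
    then show "w \<in> ?X" using orbit_W_char[OF pG H] h(1) by blast
  qed
  have img: "supp ` ?X = (\<lambda>h. h ` A) ` H"
  proof
    show "supp ` ?X \<subseteq> (\<lambda>h. h ` A) ` H" using claim by blast
    show "(\<lambda>h. h ` A) ` H \<subseteq> supp ` ?X"
    proof
      fix B assume "B \<in> (\<lambda>h. h ` A) ` H"
      then obtain h where h: "h \<in> H" "B = h ` A" by blast
      have bh: "bij h" using pg_bij[OF H h(1)] .
      define w0 where "w0 = ((\<chi> j. v $ inv h j) :: ('f^'k)^'n)"
      have "supp w0 = h ` A"
      proof
        show "supp w0 \<subseteq> h ` A"
        proof
          fix j assume "j \<in> supp w0"
          then have "inv h j \<in> A" unfolding supp_def w0_def A_def by simp
          moreover have "j = h (inv h j)" using bh by (simp add: bij_is_surj surj_f_inv_f)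
          ultimately show "j \<in> h ` A" by blast
        qed
        show "h ` A \<subseteq> supp w0" using bh unfolding supp_def w0_def A_def
          by (auto simp: bij_is_inj)
      qed
      then have "w0 \<in> ?X" using claim h(1) by blast
      then show "B \<in> supp ` ?X" using \<open>supp w0 = h ` A\<close> h(2) by blast
    qed
  qed
  define N where "N = CARD('f^'k)"
  have fib: "card {w\<in>?X. supp w = B} = (N - 1) ^ card A" if B: "B \<in> supp ` ?X" for B
  proof -
    obtain h where h: "h \<in> H" "B = h ` A" using B img by auto
    have bh: "bij h" using pg_bij[OF H h(1)] .
    define S where "S j = (if j \<in> B then UNIV - {0} else {0::'f^'k})" for j
    have e1: "{w\<in>?X. supp w = B} = {w. supp w = B}"
      using claim h by blast
    have e2: "{w. supp w = B} = {w. \<forall>j. w $ j \<in> S j}"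
      unfolding S_def supp_def by (auto simp: set_eq_iff)
    have "{w\<in>?X. supp w = B} = {w. \<forall>j. w $ j \<in> S j}" using e1 e2 by simp
    then have "card {w\<in>?X. supp w = B} = (\<Prod>j\<in>UNIV. card (S j))" by (simp add: card_vecset)
    also have "\<dots> = (\<Prod>j\<in>(UNIV::'n set). if j \<in> B then N - 1 else 1)"
      unfolding S_def N_def by (intro prod.cong) (auto simp: card_Diff_singleton)
    also have "\<dots> = (N - 1) ^ card B" by (rule prod_if_card)
    also have "card B = card A" using h bh by (metis bij_is_inj card_image inj_on_subset subset_UNIV)
    finally show ?thesis .
  qed
  have "card ?X = card (supp ` ?X) * (N - 1) ^ card A"
    by (rule card_fibers) (use fib in auto)
  moreover have "coprime (card (supp ` ?X)) p" using conc img by simp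
  moreover have "coprime (N - 1) p" unfolding N_def using cop1[OF p(1), of "CARD('k)"] p(2) by simp
  ultimately show ?thesis by simp
qed


lemma bij_fun_eq: assumes "bij h" shows "(\<forall>i. P (h i) = Q i) \<longleftrightarrow> P = Q \<circ> inv h"
proof
  assume a: "\<forall>i. P (h i) = Q i"
  show "P = Q \<circ> inv h"
  proof
    fix j obtain i where "j = h i" using bij_surj_ex[OF assms] by blast
    then show "P j = (Q \<circ> inv h) j" using a assms by (simp add: bij_is_inj)
  qed
next
  assume "P = Q \<circ> inv h"
  then show "\<forall>i. P (h i) = Q i" using assms by (simp add: bij_is_inj)
qed

lemma orbit_case2:
  fixes G1 :: "('f::{field,finite} ^ 'k \<Rightarrow> 'f ^ 'k) set" and H :: "('n::finite \<Rightarrow> 'n) set"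
  assumes G: "linear_group (*s) G1" and H: "perm_group H"
    and exc: "\<forall>u. coprime (card (orbit G1 u)) p"
    and cop: "coprime (card H) p"
  shows "coprime (card (orbit (wreath G1 H) v)) p"
proof -
  have pG: "perm_group G1" using G unfolding linear_group_def by simp
  define Q where "Q i = orbit G1 (v$i)" for i
  define pi where "pi w j = orbit G1 (w$j)" for w :: "('f^'k)^'n" and j
  let ?X = "orbit (wreath G1 H) v"
  have claim: "w \<in> ?X \<longleftrightarrow> (\<exists>h\<in>H. pi w = Q \<circ> inv h)" for w
  proof -
    have "w \<in> ?X \<longleftrightarrow> (\<exists>h\<in>H. \<forall>i. \<exists>x\<in>G1. x (v$i) = w$(h i))" by (rule orbit_W_char[OF pG H])
    also have "\<dots> \<longleftrightarrow> (\<exists>h\<in>H. \<forall>i. pi w (h i) = Q i)"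
    proof -
      have "(\<exists>x\<in>G1. x (v$i) = w$(h i)) \<longleftrightarrow> pi w (h i) = Q i" for h i
      proof -
        have "(\<exists>x\<in>G1. x (v$i) = w$(h i)) \<longleftrightarrow> w$(h i) \<in> Q i" unfolding Q_def orbit_def by (auto simp: image_iff eq_commute)
        also have "\<dots> \<longleftrightarrow> pi w (h i) = Q i" unfolding pi_def Q_def
          using orbit_eq[OF pG] orbit_self[OF pG] by metis
        finally show ?thesis .
      qed
      then show ?thesis by simp
    qed
    also have "\<dots> \<longleftrightarrow> (\<exists>h\<in>H. pi w = Q \<circ> inv h)"
      using bij_fun_eq pg_bij[OF H] by metis
    finally show ?thesis .
  qed
  have img: "pi ` ?X = (\<lambda>h. Q \<circ> inv h) ` H"
  proof
    show "pi ` ?X \<subseteq> (\<lambda>h. Q \<circ> inv h) ` H" using claim by blast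
    show "(\<lambda>h. Q \<circ> inv h) ` H \<subseteq> pi ` ?X"
    proof
      fix B assume "B \<in> (\<lambda>h. Q \<circ> inv h) ` H"
      then obtain h where h: "h \<in> H" "B = Q \<circ> inv h" by blast
      define w0 where "w0 = ((\<chi> j. v $ inv h j) :: ('f^'k)^'n)"
      have "pi w0 = Q \<circ> inv h" unfolding pi_def w0_def Q_def by (simp add: fun_eq_iff)
      moreover have "w0 \<in> ?X" using claim h calculation by blast
      ultimately show "B \<in> pi ` ?X" using h(2) by (intro image_eqI[of _ pi w0]) auto
    qed
  qed
  define c where "c = (\<Prod>i\<in>UNIV. card (Q i))"
  have fib: "card {w\<in>?X. pi w = B} = c" if B: "B \<in> pi ` ?X" for B
  proof -
    obtain h where h: "h \<in> H" "B = Q \<circ> inv h" using B img by auto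
    have bh: "bij h" using pg_bij[OF H h(1)] .
    have e: "{w\<in>?X. pi w = B} = {w. \<forall>j. w $ j \<in> B j}"
    proof (intro set_eqI iffI)
      fix w assume "w \<in> {w\<in>?X. pi w = B}"
      then have "pi w = B" by simp
      then show "w \<in> {w. \<forall>j. w $ j \<in> B j}" unfolding pi_def using orbit_self[OF pG] by auto
    next
      fix w assume w: "w \<in> {w. \<forall>j. w $ j \<in> B j}"
      have "pi w = B"
      proof
        fix j have "w$j \<in> orbit G1 (v $ inv h j)" using w h(2) unfolding Q_def by simp
        then show "pi w j = B j" unfolding pi_def h(2) Q_def using orbit_eq[OF pG] by simp
      qed
      then show "w \<in> {w\<in>?X. pi w = B}" using claim h by auto
    qed
    have "card {w\<in>?X. pi w = B} = (\<Prod>j\<in>UNIV. card (B j))"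
      unfolding e by (rule card_vecset)
    also have "\<dots> = (\<Prod>j\<in>UNIV. card (Q (inv h j)))" using h(2) by simp
    also have "\<dots> = c" unfolding c_def
      by (rule prod.reindex_bij_betw) (use bh bij_imp_bij_inv in auto)
    finally show ?thesis .
  qed
  have "card ?X = card (pi ` ?X) * c"
    by (rule card_fibers) (use fib in auto)
  moreover have "coprime c p" unfolding c_def Q_def by (rule prod_coprime_left) (use exc in auto)
  moreover have "coprime (card (pi ` ?X)) p"
  proof -
    have fH: "finite H" by (rule finite_subset[OF subset_UNIV]) simp
    have comp: "(P :: 'n \<Rightarrow> ('f^'k) set) \<circ> inv (g \<circ> h) = (P \<circ> inv h) \<circ> inv g"
      if "g \<in> H" "h \<in> H" for g h P
    proof -
      have "bij g" "bij h" using pg_bij[OF H] that by auto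
      then show ?thesis by (simp add: o_inv_distrib o_assoc)
    qed
    have "card ((\<lambda>h. Q \<circ> inv h) ` H) dvd card H"
      using orbit_card_dvd[OF H fH, of "\<lambda>h P. P \<circ> inv h" Q] comp by (simp add: inv_id)
    then have "card (pi ` ?X) dvd card H" unfolding img by simp
    then show ?thesis using cop coprime_divisors[of "card (pi ` ?X)" "card H" p p] by simp
  qed
  ultimately show ?thesis by simp
qed

theorem lemma2p5:
  fixes p :: nat
    and G1 :: "('f::{field,finite} ^ 'k \<Rightarrow> 'f ^ 'k) set"
    and H :: "('n::finite \<Rightarrow> 'n) set"
  assumes "prime p"
    and "CARD('f) = p"
    and "linear_group (*s) G1"
    and "perm_group H"
    and "(transitive_nonzero G1 \<and> p_concealed p H) \<or>
         (p_exceptional (*s) p G1 \<and> coprime (card H) p)"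
  shows "p_exceptional (block_scale :: 'f \<Rightarrow> _) p (wreath G1 H)"
proof -
  have lg: "linear_group (block_scale :: 'f \<Rightarrow> _) (wreath G1 H)"
    by (rule linear_group_W[OF assms(3,4)])
  have cW: "card (wreath G1 H) = card G1 ^ CARD('n) * card H" by (rule card_W[OF assms(3,4)])
  show ?thesis
    using assms(5)
  proof
    assume a: "transitive_nonzero G1 \<and> p_concealed p H"
    have "p dvd card (wreath G1 H)" using a unfolding cW p_concealed_def by simp
    moreover have "\<forall>v. coprime (card (orbit (wreath G1 H) v)) p"
      using orbit_case1[OF assms(3,4)] a assms(1,2) unfolding p_concealed_def by blast
    ultimately show ?thesis using lg unfolding p_exceptional_def by simp
  next
    assume a: "p_exceptional (*s) p G1 \<and> coprime (card H) p"
    have "p dvd card G1" using a unfolding p_exceptional_def by simp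
    moreover have "card G1 dvd card G1 ^ CARD('n)" by (rule dvd_power) simp
    ultimately have "p dvd card G1 ^ CARD('n)" by (rule dvd_trans)
    then have "p dvd card (wreath G1 H)" unfolding cW by simp
    moreover have "\<forall>v. coprime (card (orbit (wreath G1 H) v)) p"
      using orbit_case2[OF assms(3,4)] a unfolding p_exceptional_def by blast
    ultimately show ?thesis using lg unfolding p_exceptional_def by simp
  qed
qed

end
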